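(* For $k\in\mathbb{Z}/(l+1)\mathbb{Z}$ and $0\le r\le l-1$, define $g_{k,r}=s_{k+r}s_{k+r-1}\cdots s_{k+1}\big(\alpha_k/f_k\big)$ (with $g_{k,0}=\alpha_k/f_k$). Then $g_{k,r}$ equals the continued fraction $$g_{k,r}=\cfrac{\alpha_k+\alpha_{k+1}+\cdots+\alpha_{k+r}}{f_k-\cfrac{\alpha_{k+1}+\cdots+\alpha_{k+r}}{f_{k+1}-\cfrac{\ddots}{\ddots-\cfrac{\alpha_{k+r}}{f_{k+r}}}}}.$$ Moreover the translation $T_1=\pi s_ls_{l-1}\cdots s_1$ acts by $$T_1(f_0)=f_1-g_{2,l-1}+g_{0,0},\qquad T_1(f_1)=f_2-g_{3,l-2},$$ $$T_1(f_j)=f_{j+1}-g_{j+2,\,l-1-j}+g_{j,\,l+1-j}\quad(2\le j\le l-1),\qquad T_1(f_l)=f_0+g_{l,1},$$ and $T_1(\alpha_0)=\alpha_0+\delta$, $T_1(\alpha_1)=\alpha_1-\delta$, $T_1(\alpha_j)=\alpha_j$ for $j\neq0,1$.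
   Context: Let $l\ge2$ and index by $\mathbb{Z}/(l+1)\mathbb{Z}$. Let $\mathbb{C}(\alpha;f)$ be the field of rational functions over $\mathbb{C}$ in independent variables $\alpha_0,\dots,\alpha_l,f_0,\dots,f_l$, and set $\delta=\alpha_0+\cdots+\alpha_l$. For each $i$, $s_i$ is the field automorphism with $s_i(\alpha_i)=-\alpha_i$, $s_i(\alpha_{i\pm1})=\alpha_{i\pm1}+\alpha_i$, $s_i(\alpha_j)=\alpha_j$ for $j\ne i,i\pm1$, $s_i(f_i)=f_i$, $s_i(f_{i+1})=f_{i+1}+\alpha_i/f_i$, $s_i(f_{i-1})=f_{i-1}-\alpha_i/f_i$, $s_i(f_j)=f_j$ for $j\neq i,i\pm1$; and $\pi$ is the automorphism with $\pi(\alpha_j)=\alpha_{j+1}$, $\pi(f_j)=f_{j+1}$. Products of automorphisms are compositions, $(gh)(x)=g(h(x))$. *)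

theory Defs
  imports Complex_Main "HOL-Library.Poly_Mapping" "HOL-Library.Product_Lexorder"
    "HOL-Computational_Algebra.Fraction_Field"
begin

text \<open>Variables: (False, j) stands for alpha_j and (True, j) for f_j.
  Polynomials over C in these variables are finitely supported maps from
  monomials (exponent vectors) to coefficients; rf is their fraction field,
  i.e. the field of rational functions C(alpha; f) (with index j in 0..l
  used; variables with j > l are fixed by all automorphisms below).\<close>

type_synonym var = "bool \<times> nat"
type_synonym mpoly = "(var \<Rightarrow>\<^sub>0 nat) \<Rightarrow>\<^sub>0 complex"
type_synonym rf = "mpoly fract"

definition rvar :: "var \<Rightarrow> rf" where
  "rvar v = Fract (Poly_Mapping.single (Poly_Mapping.single v 1) 1) 1"

definition rconst :: "complex \<Rightarrow> rf" where
  "rconst c = Fract (Poly_Mapping.single 0 c) 1"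

definition peval :: "(var \<Rightarrow> rf) \<Rightarrow> mpoly \<Rightarrow> rf" where
  "peval \<sigma> p = (\<Sum>m\<in>Poly_Mapping.keys p. rconst (Poly_Mapping.lookup p m) *
     (\<Prod>v\<in>Poly_Mapping.keys (m :: var \<Rightarrow>\<^sub>0 nat). \<sigma> v ^ Poly_Mapping.lookup m v))"

text \<open>The C-algebra endomorphism of the rational function field determined by the
  images of the variables (well defined for the automorphisms considered here).\<close>
definition subst :: "(var \<Rightarrow> rf) \<Rightarrow> rf \<Rightarrow> rf" where
  "subst \<sigma> x = (SOME y. \<exists>a b. b \<noteq> 0 \<and> x = Fract a b \<and> y = peval \<sigma> a / peval \<sigma> b)"

definition alph :: "nat \<Rightarrow> nat \<Rightarrow> rf" where
  "alph l j = rvar (False, j mod (l + 1))"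

definition fv :: "nat \<Rightarrow> nat \<Rightarrow> rf" where
  "fv l j = rvar (True, j mod (l + 1))"

definition delta :: "nat \<Rightarrow> rf" where
  "delta l = (\<Sum>j\<le>l. alph l j)"

definition s_gen :: "nat \<Rightarrow> nat \<Rightarrow> var \<Rightarrow> rf" where
  "s_gen l i v = (case v of
      (False, j) \<Rightarrow>
        if l < j then rvar v
        else if j = i mod (l + 1) then - alph l i
        else if j = (i + 1) mod (l + 1) \<or> j = (i + l) mod (l + 1) then alph l j + alph l i
        else alph l j
    | (True, j) \<Rightarrow>
        if l < j then rvar v
        else if j = (i + 1) mod (l + 1) then fv l j + alph l i / fv l i
        else if j = (i + l) mod (l + 1) then fv l j - alph l i / fv l i
        else fv l j)"

definition pi_gen :: "nat \<Rightarrow> var \<Rightarrow> rf" where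
  "pi_gen l v = (case v of (b, j) \<Rightarrow>
      if l < j then rvar v else rvar (b, (j + 1) mod (l + 1)))"

definition s_aut :: "nat \<Rightarrow> nat \<Rightarrow> rf \<Rightarrow> rf" where
  "s_aut l i = subst (s_gen l i)"

definition pi_aut :: "nat \<Rightarrow> rf \<Rightarrow> rf" where
  "pi_aut l = subst (pi_gen l)"

text \<open>chain l k r = s_{k+r} o s_{k+r-1} o ... o s_{k+1}  (identity for r = 0).\<close>
fun chain :: "nat \<Rightarrow> nat \<Rightarrow> nat \<Rightarrow> rf \<Rightarrow> rf" where
  "chain l k 0 = id"
| "chain l k (Suc r) = s_aut l (k + Suc r) \<circ> chain l k r"

definition g :: "nat \<Rightarrow> nat \<Rightarrow> nat \<Rightarrow> rf" where
  "g l k r = chain l k r (alph l k / fv l k)"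

fun cf :: "nat \<Rightarrow> nat \<Rightarrow> nat \<Rightarrow> rf" where
  "cf l k 0 = alph l k / fv l k"
| "cf l k (Suc r) = (\<Sum>i\<le>Suc r. alph l (k + i)) / (fv l k - cf l (k + 1) r)"

definition T1 :: "nat \<Rightarrow> rf \<Rightarrow> rf" where
  "T1 l = pi_aut l \<circ> chain l 0 l"

end

theory Submission
  imports Defs
begin

abbreviation E :: "mpoly \<Rightarrow> rf" where "E p \<equiv> Fract p 1"

lemma rconst_0[simp]: "rconst 0 = 0" by (simp add: rconst_def Zero_fract_def)
lemma rconst_1[simp]: "rconst 1 = 1" by (simp add: rconst_def One_fract_def)
lemma rconst_add: "rconst (a + b) = rconst a + rconst b"
  by (simp add: rconst_def single_add)
lemma rconst_mult: "rconst (a * b) = rconst a * rconst b"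
  by (simp add: rconst_def mult_single)

definition mmono :: "(var \<Rightarrow> rf) \<Rightarrow> (var \<Rightarrow>\<^sub>0 nat) \<Rightarrow> rf" where
  "mmono \<sigma> m = (\<Prod>v\<in>Poly_Mapping.keys m. \<sigma> v ^ Poly_Mapping.lookup m v)"

lemma peval_mono: "peval \<sigma> p = (\<Sum>m\<in>Poly_Mapping.keys p. rconst (Poly_Mapping.lookup p m) * mmono \<sigma> m)"
  by (simp add: peval_def mmono_def)

lemma peval_alt:
  assumes "finite S" "Poly_Mapping.keys p \<subseteq> S"
  shows "peval \<sigma> p = (\<Sum>m\<in>S. rconst (Poly_Mapping.lookup p m) * mmono \<sigma> m)"
  unfolding peval_mono
  by (rule sum.mono_neutral_left) (use assms in \<open>auto simp: in_keys_iff\<close>)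

lemma mmono_alt:
  assumes "finite S" "Poly_Mapping.keys m \<subseteq> S"
  shows "mmono \<sigma> m = (\<Prod>v\<in>S. \<sigma> v ^ Poly_Mapping.lookup m v)"
  unfolding mmono_def
  by (rule prod.mono_neutral_left) (use assms in \<open>auto simp: in_keys_iff\<close>)

lemma peval_add: "peval \<sigma> (p + q) = peval \<sigma> p + peval \<sigma> q"
proof -
  let ?S = "Poly_Mapping.keys p \<union> Poly_Mapping.keys q"
  have f: "finite ?S" by simp
  have "Poly_Mapping.keys (p + q) \<subseteq> ?S"
    by (auto simp: in_keys_iff lookup_add)
  then show ?thesis
    using peval_alt[OF f, of p] peval_alt[OF f, of q] peval_alt[OF f, of "p+q"]
    by (simp add: lookup_add rconst_add distrib_right sum.distrib)
qed

lemma peval_zero[simp]: "peval \<sigma> 0 = 0"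
  by (simp add: peval_def)

lemma peval_single: "peval \<sigma> (Poly_Mapping.single m c) = rconst c * mmono \<sigma> m"
  by (subst peval_alt[of "{m}"]) auto

lemma mmono_zero[simp]: "mmono \<sigma> 0 = 1" by (simp add: mmono_def)

lemma mmono_add: "mmono \<sigma> (m1 + m2) = mmono \<sigma> m1 * mmono \<sigma> m2"
proof -
  let ?S = "Poly_Mapping.keys m1 \<union> Poly_Mapping.keys m2"
  have f: "finite ?S" by simp
  have "Poly_Mapping.keys (m1 + m2) \<subseteq> ?S"
    by (auto simp: in_keys_iff lookup_add)
  then show ?thesis
    using mmono_alt[OF f, of m1] mmono_alt[OF f, of m2] mmono_alt[OF f, of "m1+m2"]
    by (simp add: lookup_add power_add prod.distrib)
qed

lemma mmono_single: "mmono \<sigma> (Poly_Mapping.single v e) = \<sigma> v ^ e"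
  by (subst mmono_alt[of "{v}"]) auto

lemma pm_induct:
  fixes f :: "'a \<Rightarrow>\<^sub>0 'b::comm_monoid_add"
  assumes "P 0" "\<And>a b. P (Poly_Mapping.single a b)" "\<And>p q. P p \<Longrightarrow> P q \<Longrightarrow> P (p + q)"
  shows "P f"
proof (induct f rule: update_induct)
  case const then show ?case using assms(1) .
next
  case (update f a b)
  have "Poly_Mapping.update a b f = f + Poly_Mapping.single a b"
    using update(1)
    by (intro poly_mapping_eqI) (auto simp: lookup_update lookup_add lookup_single in_keys_iff when_def)
  then show ?case using assms(2,3) update by simp
qed

lemma peval_mult: "peval \<sigma> (p * q) = peval \<sigma> p * peval \<sigma> q"
proof (induct p rule: pm_induct)
  case (2 m c)
  show ?case
  proof (induct q rule: pm_induct)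
    case (2 m' c')
    then show ?case by (simp add: mult_single peval_single mmono_add rconst_mult)
  next
    case (3 p q) then show ?case by (simp add: distrib_left peval_add)
  qed simp
next
  case (3 p q) then show ?case by (simp add: distrib_right peval_add)
qed simp

lemma peval_one[simp]: "peval \<sigma> 1 = 1"
  using peval_single[of \<sigma> 0 1] by simp

lemma peval_uminus: "peval \<sigma> (- p) = - peval \<sigma> p"
  using peval_add[of \<sigma> "-p" p] by (simp add: eq_neg_iff_add_eq_0)

lemma peval_diff: "peval \<sigma> (p - q) = peval \<sigma> p - peval \<sigma> q"
  using peval_add[of \<sigma> p "-q"] peval_uminus[of \<sigma> q] by simp

lemma peval_pow: "peval \<sigma> (p ^ n) = peval \<sigma> p ^ n"
  by (induct n) (simp_all add: peval_mult)

definition X :: "var \<Rightarrow> mpoly" where "X v = Poly_Mapping.single (Poly_Mapping.single v 1) 1"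

lemma peval_X[simp]: "peval \<sigma> (X v) = \<sigma> v"
  by (simp add: peval_single mmono_single X_def)

lemma rvar_E: "rvar v = E (X v)" by (simp add: rvar_def X_def)

lemma X_pow: "(X v) ^ e = Poly_Mapping.single (Poly_Mapping.single v e) 1"
  unfolding X_def
proof (induct e)
  case (Suc e)
  have "Poly_Mapping.single v (Suc e) = Poly_Mapping.single v 1 + Poly_Mapping.single v e"
    using single_add[of v 1 e] by simp
  then show ?case using Suc by (simp add: mult_single)
qed simp

lemma E_mult: "E (p * q) = E p * E q" by simp
lemma E_add: "E (p + q) = E p + E q" by simp

lemma E_pow: "E (p ^ n) = E p ^ n"
  by (induct n) (simp_all add: One_fract_def E_mult del: mult_fract)

lemma E_single_mono: "E (Poly_Mapping.single m 1) = mmono rvar m"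
proof (induct m rule: pm_induct)
  case 1 then show ?case by (simp add: One_fract_def)
next
  case (2 a b)
  then show ?case using X_pow[of a b] E_pow[of "X a" b] by (simp add: mmono_single rvar_E)
next
  case (3 p q)
  have "Poly_Mapping.single (p + q) (1::complex) = Poly_Mapping.single p 1 * Poly_Mapping.single q 1"
    by (simp add: mult_single)
  then show ?case using 3 by (simp add: mmono_add E_mult del: mult_fract mult_single)
qed

lemma peval_rvar: "peval rvar p = E p"
proof (induct p rule: pm_induct)
  case 1 then show ?case by (simp add: Zero_fract_def)
next
  case (2 a b)
  have "Poly_Mapping.single a b = Poly_Mapping.single 0 b * Poly_Mapping.single a 1"
    by (simp add: mult_single)
  then show ?case using E_single_mono[of a] by (simp add: peval_single rconst_def peval_mult E_mult One_fract_def del: mult_single mult_fract)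
next
  case (3 p q) then show ?case by (simp add: peval_add)
qed


lemma X_nz[simp]: "X v \<noteq> 0"
proof
  assume "X v = 0"
  then have "Poly_Mapping.lookup (X v) (Poly_Mapping.single v 1) = 0" by simp
  then show False by (simp add: X_def)
qed

lemma Xpow_nz[simp]: "X v ^ n \<noteq> 0" by simp

lemma E_eq_0_iff[simp]: "E p = 0 \<longleftrightarrow> p = 0"
  by (simp add: Zero_fract_def eq_fract)

lemma rvar_nz[simp]: "rvar v \<noteq> 0"
  by (simp add: rvar_E)

definition inj_ev :: "(var \<Rightarrow> rf) \<Rightarrow> bool" where
  "inj_ev \<sigma> \<longleftrightarrow> (\<forall>b. b \<noteq> 0 \<longrightarrow> peval \<sigma> b \<noteq> 0)"

lemma subst_Fract:
  assumes inj: "inj_ev \<sigma>" and b: "b \<noteq> 0"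
  shows "subst \<sigma> (Fract a b) = peval \<sigma> a / peval \<sigma> b"
  unfolding subst_def
proof (rule some_equality)
  show "\<exists>a' b'. b' \<noteq> 0 \<and> Fract a b = Fract a' b' \<and> peval \<sigma> a / peval \<sigma> b = peval \<sigma> a' / peval \<sigma> b'"
    using b by blast
next
  fix y assume "\<exists>a' b'. b' \<noteq> 0 \<and> Fract a b = Fract a' b' \<and> y = peval \<sigma> a' / peval \<sigma> b'"
  then obtain a' b' where h: "b' \<noteq> 0" "Fract a b = Fract a' b'" "y = peval \<sigma> a' / peval \<sigma> b'" by blast
  have "a * b' = a' * b" using h b by (simp add: eq_fract)
  then have "peval \<sigma> a * peval \<sigma> b' = peval \<sigma> a' * peval \<sigma> b"
    by (metis peval_mult)
  moreover have "peval \<sigma> b \<noteq> 0" "peval \<sigma> b' \<noteq> 0" using inj b h(1) by (auto simp: inj_ev_def)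
  ultimately have "peval \<sigma> a / peval \<sigma> b = peval \<sigma> a' / peval \<sigma> b'"
    by (simp add: frac_eq_eq)
  then show "y = peval \<sigma> a / peval \<sigma> b" using h(3) by simp
qed

definition fhom :: "(rf \<Rightarrow> rf) \<Rightarrow> bool" where
  "fhom h \<longleftrightarrow> (\<forall>x y. h (x + y) = h x + h y) \<and> (\<forall>x y. h (x * y) = h x * h y) \<and> h 1 = 1"

lemma subst_fhom:
  assumes inj: "inj_ev \<sigma>"
  shows "fhom (subst \<sigma>)"
  unfolding fhom_def
proof (intro conjI allI)
  fix x y :: rf
  obtain a b where x: "x = Fract a b" "b \<noteq> 0" by (cases x)
  obtain c d where y: "y = Fract c d" "d \<noteq> 0" by (cases y)
  have nz: "peval \<sigma> b \<noteq> 0" "peval \<sigma> d \<noteq> 0" using inj x y by (auto simp: inj_ev_def)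
  show "subst \<sigma> (x + y) = subst \<sigma> x + subst \<sigma> y"
    using x y nz by (simp add: subst_Fract[OF inj] peval_add peval_mult field_simps)
  show "subst \<sigma> (x * y) = subst \<sigma> x * subst \<sigma> y"
    using x y nz by (simp add: subst_Fract[OF inj] peval_add peval_mult field_simps)
next
  show "subst \<sigma> 1 = 1" by (simp add: One_fract_def subst_Fract[OF inj])
qed

lemma subst_rvar: "inj_ev \<sigma> \<Longrightarrow> subst \<sigma> (rvar v) = \<sigma> v"
  by (simp add: rvar_E subst_Fract)

lemma fhom_add: "fhom h \<Longrightarrow> h (x + y) = h x + h y" by (simp add: fhom_def)
lemma fhom_mult: "fhom h \<Longrightarrow> h (x * y) = h x * h y" by (simp add: fhom_def)
lemma fhom_1: "fhom h \<Longrightarrow> h 1 = 1" by (simp add: fhom_def)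
lemma fhom_0: "fhom h \<Longrightarrow> h 0 = 0"
proof -
  assume "fhom h"
  then have "h 0 = h 0 + h 0" using fhom_add[of h 0 0] by simp
  then show ?thesis by (metis add_cancel_right_right)
qed
lemma fhom_uminus: "fhom h \<Longrightarrow> h (- x) = - h x"
  using fhom_add[of h x "-x"] fhom_0[of h] by (simp add: eq_neg_iff_add_eq_0 add.commute)
lemma fhom_diff: "fhom h \<Longrightarrow> h (x - y) = h x - h y"
  using fhom_add[of h x "-y"] fhom_uminus[of h y] by simp
lemma fhom_inverse: "fhom h \<Longrightarrow> h (inverse x) = inverse (h x)"
proof (cases "x = 0")
  case True assume "fhom h" then show ?thesis using True by (simp add: fhom_0)
next
  case False assume h: "fhom h"
  have "h x * h (inverse x) = 1" using fhom_mult[OF h, of x "inverse x"] False fhom_1[OF h] by simp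
  then show ?thesis by (metis inverse_unique)
qed
lemma fhom_divide: "fhom h \<Longrightarrow> h (x / y) = h x / h y"
  by (simp add: divide_inverse fhom_mult fhom_inverse)
lemma fhom_sum: "fhom h \<Longrightarrow> h (\<Sum>i\<in>S. f i) = (\<Sum>i\<in>S. h (f i))"
  by (induct S rule: infinite_finite_induct) (simp_all add: fhom_0 fhom_add)
lemma fhom_comp: "fhom h \<Longrightarrow> fhom k \<Longrightarrow> fhom (h \<circ> k)"
  by (simp add: fhom_def)
lemma fhom_id: "fhom id" by (simp add: fhom_def)

definition Loc :: "var \<Rightarrow> rf set" where
  "Loc w = {x. \<exists>p n. x = Fract p (X w ^ n)}"

definition Psi :: "(var \<Rightarrow> rf) \<Rightarrow> var \<Rightarrow> rf \<Rightarrow> rf" where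
  "Psi \<tau> w x = (SOME y. \<exists>p n. x = Fract p (X w ^ n) \<and> y = peval \<tau> p / rvar w ^ n)"

lemma Psi_eq:
  assumes tw: "\<tau> w = rvar w"
  shows "Psi \<tau> w (Fract p (X w ^ n)) = peval \<tau> p / rvar w ^ n"
  unfolding Psi_def
proof (rule some_equality)
  fix y assume "\<exists>q m. Fract p (X w ^ n) = Fract q (X w ^ m) \<and> y = peval \<tau> q / rvar w ^ m"
  then obtain q m where h: "Fract p (X w ^ n) = Fract q (X w ^ m)" "y = peval \<tau> q / rvar w ^ m" by blast
  have "p * X w ^ m = q * X w ^ n" using h(1) by (simp add: eq_fract)
  then have "peval \<tau> p * rvar w ^ m = peval \<tau> q * rvar w ^ n"
    by (metis peval_mult peval_pow peval_X tw)
  then have "peval \<tau> p / rvar w ^ n = peval \<tau> q / rvar w ^ m" by (simp add: frac_eq_eq)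
  then show "y = peval \<tau> p / rvar w ^ n" using h(2) by simp
qed blast

lemma Loc_add: "x \<in> Loc w \<Longrightarrow> y \<in> Loc w \<Longrightarrow> x + y \<in> Loc w \<and> (\<tau> w = rvar w \<longrightarrow> Psi \<tau> w (x + y) = Psi \<tau> w x + Psi \<tau> w y)"
proof -
  assume "x \<in> Loc w" "y \<in> Loc w"
  then obtain p n q m where x: "x = Fract p (X w ^ n)" and y: "y = Fract q (X w ^ m)" by (auto simp: Loc_def)
  have e: "x + y = Fract (p * X w ^ m + q * X w ^ n) (X w ^ (n + m))"
    by (simp add: x y power_add)
  show ?thesis
  proof
    show "x + y \<in> Loc w" using e by (auto simp: Loc_def)
    show "\<tau> w = rvar w \<longrightarrow> Psi \<tau> w (x + y) = Psi \<tau> w x + Psi \<tau> w y"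
    proof
      assume tw: "\<tau> w = rvar w"
      have "Psi \<tau> w (x + y) = peval \<tau> (p * X w ^ m + q * X w ^ n) / rvar w ^ (n + m)"
        by (simp only: e Psi_eq[of \<tau> w, OF tw])
      also have "\<dots> = peval \<tau> p / rvar w ^ n + peval \<tau> q / rvar w ^ m"
        using tw by (simp add: peval_add peval_mult peval_pow power_add field_simps)
      finally show "Psi \<tau> w (x + y) = Psi \<tau> w x + Psi \<tau> w y"
        by (simp only: x y Psi_eq[of \<tau> w, OF tw])
    qed
  qed
qed

lemma Loc_mult: "x \<in> Loc w \<Longrightarrow> y \<in> Loc w \<Longrightarrow> x * y \<in> Loc w \<and> (\<tau> w = rvar w \<longrightarrow> Psi \<tau> w (x * y) = Psi \<tau> w x * Psi \<tau> w y)"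
proof -
  assume "x \<in> Loc w" "y \<in> Loc w"
  then obtain p n q m where x: "x = Fract p (X w ^ n)" and y: "y = Fract q (X w ^ m)" by (auto simp: Loc_def)
  have e: "x * y = Fract (p * q) (X w ^ (n + m))"
    by (simp add: x y power_add)
  show ?thesis
  proof
    show "x * y \<in> Loc w" using e by (auto simp: Loc_def)
    show "\<tau> w = rvar w \<longrightarrow> Psi \<tau> w (x * y) = Psi \<tau> w x * Psi \<tau> w y"
    proof
      assume tw: "\<tau> w = rvar w"
      have "Psi \<tau> w (x * y) = peval \<tau> (p * q) / rvar w ^ (n + m)"
        by (simp only: e Psi_eq[of \<tau> w, OF tw])
      also have "\<dots> = peval \<tau> p / rvar w ^ n * (peval \<tau> q / rvar w ^ m)"
        using tw by (simp add: peval_mult power_add)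
      finally show "Psi \<tau> w (x * y) = Psi \<tau> w x * Psi \<tau> w y"
        by (simp only: x y Psi_eq[of \<tau> w, OF tw])
    qed
  qed
qed

lemma Loc_E: "E p \<in> Loc w" unfolding Loc_def by (rule CollectI, rule exI[of _ p], rule exI[of _ 0]) simp

lemma Psi_E: "\<tau> w = rvar w \<Longrightarrow> Psi \<tau> w (E p) = peval \<tau> p"
  using Psi_eq[of \<tau> w p 0] by simp

lemma Loc_pow: "x \<in> Loc w \<Longrightarrow> x ^ e \<in> Loc w \<and> (\<tau> w = rvar w \<longrightarrow> Psi \<tau> w (x ^ e) = Psi \<tau> w x ^ e)"
proof (induct e)
  case 0
  have "(1::rf) = E 1" by (simp add: One_fract_def)
  then show ?case using Loc_E[of 1 w] Psi_E[of \<tau> w 1] by simp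
next
  case (Suc e)
  then show ?case using Loc_mult[of x w "x ^ e" \<tau>] by simp
qed

lemma Psi_commute:
  assumes tw: "\<tau> w = rvar w" and L: "\<And>v. \<sigma> v \<in> Loc w"
  shows "peval \<sigma> p \<in> Loc w \<and> Psi \<tau> w (peval \<sigma> p) = peval (\<lambda>v. Psi \<tau> w (\<sigma> v)) p"
proof (induct p rule: pm_induct)
  case 1
  then show ?case using Loc_E[of 0 w] Psi_E[of \<tau> w, OF tw, of 0] by (simp add: Zero_fract_def)
next
  case (2 m c)
  have M: "mmono \<sigma> m \<in> Loc w \<and> Psi \<tau> w (mmono \<sigma> m) = mmono (\<lambda>v. Psi \<tau> w (\<sigma> v)) m"
  proof (induct m rule: pm_induct)
    case 1
    then show ?case using Loc_E[of 1 w] Psi_E[of \<tau> w, OF tw, of 1] by (simp add: One_fract_def)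
  next
    case (2 v e)
    then show ?case using Loc_pow[OF L[of v], of e \<tau>] tw by (simp add: mmono_single)
  next
    case (3 p q)
    then show ?case using Loc_mult[of "mmono \<sigma> p" w "mmono \<sigma> q" \<tau>] tw by (simp add: mmono_add)
  qed
  have C: "rconst c \<in> Loc w \<and> Psi \<tau> w (rconst c) = rconst c"
    using Loc_E[of "Poly_Mapping.single 0 c" w] Psi_E[of \<tau> w, OF tw, of "Poly_Mapping.single 0 c"]
    by (simp add: rconst_def peval_single)
  show ?case using M C Loc_mult[of "rconst c" w "mmono \<sigma> m" \<tau>] tw by (simp add: peval_single)
next
  case (3 p q)
  then show ?case using Loc_add[of "peval \<sigma> p" w "peval \<sigma> q" \<tau>] tw by (simp add: peval_add)
qed

lemma inj_by_Psi:
  assumes tw: "\<tau> w = rvar w" and L: "\<And>v. \<sigma> v \<in> Loc w"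
    and inv: "\<And>v. Psi \<tau> w (\<sigma> v) = rvar v"
  shows "inj_ev \<sigma>"
  unfolding inj_ev_def
proof (intro allI impI notI)
  fix b :: mpoly assume b: "b \<noteq> 0" and z: "peval \<sigma> b = 0"
  have "Psi \<tau> w (peval \<sigma> b) = E b"
    using Psi_commute[of \<tau> w \<sigma>, OF tw L, of b] inv by (simp add: peval_rvar)
  moreover have "Psi \<tau> w 0 = 0" using Psi_E[of \<tau> w, OF tw, of 0] by (simp add: Zero_fract_def)
  ultimately show False using b z by simp
qed


lemma Loc_rvarI[simp]: "rvar u \<in> Loc w" by (simp add: rvar_E Loc_E)
lemma Loc_addI[simp]: "x \<in> Loc w \<Longrightarrow> y \<in> Loc w \<Longrightarrow> x + y \<in> Loc w"
  using Loc_add by blast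
lemma Psi_add: "\<tau> w = rvar w \<Longrightarrow> x \<in> Loc w \<Longrightarrow> y \<in> Loc w \<Longrightarrow> Psi \<tau> w (x + y) = Psi \<tau> w x + Psi \<tau> w y"
  using Loc_add by blast
lemma Loc_uminus: "x \<in> Loc w \<Longrightarrow> - x \<in> Loc w \<and> (\<tau> w = rvar w \<longrightarrow> Psi \<tau> w (- x) = - Psi \<tau> w x)"
proof -
  assume "x \<in> Loc w"
  then obtain p n where x: "x = Fract p (X w ^ n)" by (auto simp: Loc_def)
  have "- x = Fract (- p) (X w ^ n)" by (simp add: x)
  then show ?thesis using x by (auto simp: Loc_def Psi_eq peval_uminus)
qed
lemma Loc_uminusI[simp]: "x \<in> Loc w \<Longrightarrow> - x \<in> Loc w"
  using Loc_uminus by blast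
lemma Psi_uminus: "\<tau> w = rvar w \<Longrightarrow> x \<in> Loc w \<Longrightarrow> Psi \<tau> w (- x) = - Psi \<tau> w x"
  using Loc_uminus by blast
lemma Loc_diffI[simp]: "x \<in> Loc w \<Longrightarrow> y \<in> Loc w \<Longrightarrow> x - y \<in> Loc w"
  by (simp only: diff_conv_add_uminus Loc_addI Loc_uminusI)
lemma Psi_diff: "\<tau> w = rvar w \<Longrightarrow> x \<in> Loc w \<Longrightarrow> y \<in> Loc w \<Longrightarrow> Psi \<tau> w (x - y) = Psi \<tau> w x - Psi \<tau> w y"
  by (simp only: diff_conv_add_uminus Psi_add Psi_uminus Loc_uminusI)
lemma Loc_divw: "x \<in> Loc w \<Longrightarrow> x / rvar w \<in> Loc w \<and> (\<tau> w = rvar w \<longrightarrow> Psi \<tau> w (x / rvar w) = Psi \<tau> w x / rvar w)"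
proof -
  assume "x \<in> Loc w"
  then obtain p n where x: "x = Fract p (X w ^ n)" by (auto simp: Loc_def)
  have e: "x / rvar w = Fract p (X w ^ Suc n)" by (simp add: x rvar_E mult.commute)
  show ?thesis
  proof
    show "x / rvar w \<in> Loc w" using e unfolding Loc_def by blast
    show "\<tau> w = rvar w \<longrightarrow> Psi \<tau> w (x / rvar w) = Psi \<tau> w x / rvar w"
    proof
      assume tw: "\<tau> w = rvar w"
      have "Psi \<tau> w (x / rvar w) = peval \<tau> p / rvar w ^ Suc n"
        by (simp only: e Psi_eq[of \<tau> w, OF tw])
      also have "\<dots> = Psi \<tau> w x / rvar w"
        by (simp only: x Psi_eq[of \<tau> w, OF tw]) (simp add: field_simps)
      finally show "Psi \<tau> w (x / rvar w) = Psi \<tau> w x / rvar w" .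
    qed
  qed
qed
lemma Loc_divwI[simp]: "x \<in> Loc w \<Longrightarrow> x / rvar w \<in> Loc w"
  using Loc_divw by blast
lemma Psi_divw: "\<tau> w = rvar w \<Longrightarrow> x \<in> Loc w \<Longrightarrow> Psi \<tau> w (x / rvar w) = Psi \<tau> w x / rvar w"
  using Loc_divw by blast
lemma Psi_rvar: "\<tau> w = rvar w \<Longrightarrow> Psi \<tau> w (rvar u) = \<tau> u"
  by (simp add: rvar_E Psi_E)

lemma alph_mod[simp]: "alph l (j mod (l + 1)) = alph l j" by (simp add: alph_def)
lemma fv_mod[simp]: "fv l (j mod (l + 1)) = fv l j" by (simp add: fv_def)


lemma mod_inj_aux: "(a::nat) < n \<Longrightarrow> b \<le> a \<Longrightarrow> (i + a) mod n = (i + b) mod n \<Longrightarrow> a = b"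
proof -
  assume h: "a < n" "b \<le> a" "(i + a) mod n = (i + b) mod n"
  then have "n dvd (i + a) - (i + b)" using mod_eq_dvd_iff_nat[of "i+b" "i+a" n] by simp
  then have "n dvd a - b" by simp
  moreover have "a - b < n" using h by simp
  ultimately have "a - b = 0" using nat_dvd_not_less by (metis gr0I)
  then show ?thesis using h by simp
qed
lemma mod_inj: "(a::nat) < n \<Longrightarrow> b < n \<Longrightarrow> (i + a) mod n = (i + b) mod n \<Longrightarrow> a = b"
  by (metis mod_inj_aux nat_le_linear)

lemma mod_cancel: "((k::nat) + a) mod n = (k + b) mod n \<longleftrightarrow> a mod n = b mod n"
proof
  assume h: "(k + a) mod n = (k + b) mod n"
  have "(k mod n + a mod n) mod n = (k mod n + b mod n) mod n"
    using h by (simp add: mod_add_eq)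
  then show "a mod n = b mod n"
  proof (cases "n = 0")
    case False
    then show ?thesis using mod_inj[of "a mod n" n "b mod n" "k mod n"]
      by (metis h mod_add_left_eq mod_add_right_eq mod_less_divisor gr0I)
  qed simp
next
  assume "a mod n = b mod n"
  then show "(k + a) mod n = (k + b) mod n" by (metis mod_add_right_eq)
qed

lemma ne1[simp]: "2 \<le> (l::nat) \<Longrightarrow> Suc i mod Suc l \<noteq> i mod Suc l"
  using mod_inj[of 1 "l+1" 0 i] by auto
lemma ne2[simp]: "2 \<le> (l::nat) \<Longrightarrow> (i + l) mod Suc l \<noteq> i mod Suc l"
  using mod_inj[of l "l+1" 0 i] by auto
lemma ne3[simp]: "2 \<le> (l::nat) \<Longrightarrow> (i + l) mod Suc l \<noteq> Suc i mod Suc l"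
  using mod_inj[of l "l+1" 1 i] by auto
lemma ne1'[simp]: "2 \<le> (l::nat) \<Longrightarrow> i mod Suc l \<noteq> Suc i mod Suc l"
  using ne1 by metis
lemma ne2'[simp]: "2 \<le> (l::nat) \<Longrightarrow> i mod Suc l \<noteq> (i + l) mod Suc l"
  using ne2 by metis
lemma ne3'[simp]: "2 \<le> (l::nat) \<Longrightarrow> Suc i mod Suc l \<noteq> (i + l) mod Suc l"
  using ne3 by metis
lemma mod_not_gt[simp]: "\<not> l < j mod Suc l"
  using mod_less_divisor[of "Suc l" j] by linarith
lemma alph_mod'[simp]: "alph l (j mod Suc l) = alph l j" by (simp add: alph_def)
lemma fv_mod'[simp]: "fv l (j mod Suc l) = fv l j" by (simp add: fv_def)

lemma s_inj:
  assumes l: "2 \<le> l"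
  shows "inj_ev (s_gen l i)"
proof (rule inj_by_Psi[where \<tau> = "s_gen l i" and w = "(True, i mod Suc l)"])
  show tw: "s_gen l i (True, i mod Suc l) = rvar (True, i mod Suc l)"
    using l by (simp add: s_gen_def fv_def)
  show L: "s_gen l i v \<in> Loc (True, i mod Suc l)" for v
  proof (cases v)
    case (Pair b j)
    then show ?thesis using l by (cases b) (auto simp: s_gen_def alph_def fv_def)
  qed
  show "Psi (s_gen l i) (True, i mod Suc l) (s_gen l i v) = rvar v" for v
  proof (cases v)
    case (Pair b j)
    show ?thesis
    proof (cases "l < j")
      case True
      then show ?thesis using Pair Psi_rvar[of "s_gen l i" "(True, i mod Suc l)", OF tw, of v]
        by (cases b) (simp_all add: s_gen_def)
    next
      case False
      then have jm: "j mod Suc l = j" by simp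
      show ?thesis
        using l Pair False jm
        by (cases b) (auto simp: s_gen_def alph_def fv_def Psi_add[of "s_gen l i" "(True, i mod Suc l)", OF tw] Psi_diff[of "s_gen l i" "(True, i mod Suc l)", OF tw] Psi_uminus[of "s_gen l i" "(True, i mod Suc l)", OF tw]
           Psi_divw[of "s_gen l i" "(True, i mod Suc l)", OF tw] Psi_rvar[of "s_gen l i" "(True, i mod Suc l)", OF tw])
    qed
  qed
qed

lemma s_fhom: "2 \<le> l \<Longrightarrow> fhom (s_aut l i)"
  unfolding s_aut_def by (rule subst_fhom[OF s_inj])

lemma sa0: "2 \<le> l \<Longrightarrow> s_aut l i (alph l j) = (if j mod (l+1) = i mod (l+1) then - alph l i
   else if j mod (l+1) = (i+1) mod (l+1) \<or> j mod (l+1) = (i+l) mod (l+1) then alph l j + alph l i else alph l j)"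
  unfolding s_aut_def
  by (subst (1) alph_def, simp only: subst_rvar[OF s_inj]) (auto simp: s_gen_def alph_def)

lemma sf0: "2 \<le> l \<Longrightarrow> s_aut l i (fv l j) = (if j mod (l+1) = (i+1) mod (l+1) then fv l j + alph l i / fv l i
   else if j mod (l+1) = (i+l) mod (l+1) then fv l j - alph l i / fv l i else fv l j)"
  unfolding s_aut_def
  by (subst (1) fv_def, simp only: subst_rvar[OF s_inj]) (auto simp: s_gen_def fv_def)

definition pinv :: "nat \<Rightarrow> var \<Rightarrow> rf" where
  "pinv l v = (case v of (b, j) \<Rightarrow> if l < j then rvar (b, j) else rvar (b, (j + l) mod Suc l))"

lemma pi_inj:
  shows "inj_ev (pi_gen l)"
proof (rule inj_by_Psi[where \<tau> = "pinv l" and w = "(True, Suc l)"])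
  show tw: "pinv l (True, Suc l) = rvar (True, Suc l)"
    by (simp add: pinv_def)
  show "pi_gen l v \<in> Loc (True, Suc l)" for v
    by (cases v) (auto simp: pi_gen_def)
  show "Psi (pinv l) (True, Suc l) (pi_gen l v) = rvar v" for v
  proof (cases v)
    case (Pair b j)
    have "j \<le> l \<Longrightarrow> (Suc j mod Suc l + l) mod Suc l = j"
      by (metis add.commute add_Suc_right mod_add_left_eq mod_add_self1 mod_less le_imp_less_Suc plus_1_eq_Suc)
    then show ?thesis using Pair
      by (auto simp: pi_gen_def pinv_def Psi_rvar[of "pinv l" "(True, Suc l)", OF tw])
  qed
qed

lemma pi_fhom: "fhom (pi_aut l)"
  unfolding pi_aut_def by (rule subst_fhom[OF pi_inj])

lemma pi_alph: "pi_aut l (alph l j) = alph l (j + 1)"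
  unfolding pi_aut_def
  by (subst (1) alph_def, simp only: subst_rvar[OF pi_inj]) (simp add: pi_gen_def alph_def mod_Suc_eq)

lemma pi_fv: "pi_aut l (fv l j) = fv l (j + 1)"
  unfolding pi_aut_def
  by (subst (1) fv_def, simp only: subst_rvar[OF pi_inj]) (simp add: pi_gen_def fv_def mod_Suc_eq)


lemma c1: "a \<le> l \<Longrightarrow> b \<le> l \<Longrightarrow> ((k::nat) + b) mod Suc l = (k + a) mod Suc l \<longleftrightarrow> b = a"
  by (simp add: mod_cancel)

lemma c2: "a \<le> l \<Longrightarrow> b \<le> l \<Longrightarrow> ((k::nat) + b) mod Suc l = Suc (k + a) mod Suc l \<longleftrightarrow> (b = a + 1 \<or> (a = l \<and> b = 0))"
proof -
  assume h: "a \<le> l" "b \<le> l"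
  have "Suc (k + a) = k + Suc a" by simp
  then have "((k::nat) + b) mod Suc l = Suc (k + a) mod Suc l \<longleftrightarrow> b mod Suc l = Suc a mod Suc l"
    by (simp only: mod_cancel)
  also have "\<dots> \<longleftrightarrow> (b = a + 1 \<or> (a = l \<and> b = 0))"
    using h by (cases "a = l") auto
  finally show ?thesis .
qed

lemma c3: "a \<le> l \<Longrightarrow> b \<le> l \<Longrightarrow> ((k::nat) + b) mod Suc l = (k + a + l) mod Suc l \<longleftrightarrow> (b + 1 = a \<or> (a = 0 \<and> b = l))"
proof -
  assume h: "a \<le> l" "b \<le> l"
  have "k + a + l = k + (a + l)" by simp
  then have "((k::nat) + b) mod Suc l = (k + a + l) mod Suc l \<longleftrightarrow> b mod Suc l = (a + l) mod Suc l"
    by (simp only: mod_cancel)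
  also have "\<dots> \<longleftrightarrow> (b + 1 = a \<or> (a = 0 \<and> b = l))"
  proof (cases "a = 0")
    case False
    then have e: "a + l = (a - 1) + Suc l" by simp
    have "(a + l) mod Suc l = ((a - 1) + Suc l) mod Suc l" by (simp only: e)
    also have "\<dots> = (a - 1) mod Suc l" by (rule mod_add_self2)
    also have "\<dots> = a - 1" using h by simp
    finally have "(a + l) mod Suc l = a - 1" .
    then show ?thesis using h False by auto
  qed (use h in auto)
  finally show ?thesis .
qed

lemma saK: "2 \<le> l \<Longrightarrow> a \<le> l \<Longrightarrow> b \<le> l \<Longrightarrow> s_aut l (k + a) (alph l (k + b)) =
  (if b = a then - alph l (k + a)
   else if b = a + 1 \<or> (a = l \<and> b = 0) \<or> b + 1 = a \<or> (a = 0 \<and> b = l) then alph l (k + b) + alph l (k + a)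
   else alph l (k + b))"
  using sa0[of l "k + a" "k + b"] c1[of a l b k] c2[of a l b k] c3[of a l b k] by simp

lemma sfK: "2 \<le> l \<Longrightarrow> a \<le> l \<Longrightarrow> b \<le> l \<Longrightarrow> s_aut l (k + a) (fv l (k + b)) =
  (if b = a + 1 \<or> (a = l \<and> b = 0) then fv l (k + b) + alph l (k + a) / fv l (k + a)
   else if b + 1 = a \<or> (a = 0 \<and> b = l) then fv l (k + b) - alph l (k + a) / fv l (k + a)
   else fv l (k + b))"
  using sf0[of l "k + a" "k + b"] c1[of a l b k] c2[of a l b k] c3[of a l b k] by simp

lemma saZ: "2 \<le> l \<Longrightarrow> a \<le> l \<Longrightarrow> b \<le> l \<Longrightarrow> s_aut l a (alph l b) =
  (if b = a then - alph l a
   else if b = a + 1 \<or> (a = l \<and> b = 0) \<or> b + 1 = a \<or> (a = 0 \<and> b = l) then alph l b + alph l a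
   else alph l b)"
  using saK[of l a b 0] by simp

lemma sfZ: "2 \<le> l \<Longrightarrow> a \<le> l \<Longrightarrow> b \<le> l \<Longrightarrow> s_aut l a (fv l b) =
  (if b = a + 1 \<or> (a = l \<and> b = 0) then fv l b + alph l a / fv l a
   else if b + 1 = a \<or> (a = 0 \<and> b = l) then fv l b - alph l a / fv l a
   else fv l b)"
  using sfK[of l a b 0] by simp

lemma chain_fhom: "2 \<le> l \<Longrightarrow> fhom (chain l k r)"
  by (induct r) (simp_all add: fhom_id fhom_comp s_fhom)

lemma chain_shift: "chain l k (Suc r) = chain l (Suc k) r \<circ> s_aut l (Suc k)"
proof (induct r)
  case (Suc r)
  have "chain l k (Suc (Suc r)) = s_aut l (k + Suc (Suc r)) \<circ> chain l k (Suc r)" by (simp only: chain.simps)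
  also have "\<dots> = s_aut l (k + Suc (Suc r)) \<circ> (chain l (Suc k) r \<circ> s_aut l (Suc k))" by (simp only: Suc)
  also have "\<dots> = chain l (Suc k) (Suc r) \<circ> s_aut l (Suc k)" by (simp add: comp_assoc)
  finally show ?case .
qed simp

lemma chain_add: "chain l k (a + b) = chain l (k + a) b \<circ> chain l k a"
  by (induct b) (simp_all add: comp_assoc add.assoc)

lemma chain_fix: "(\<And>i. 1 \<le> i \<Longrightarrow> i \<le> r \<Longrightarrow> s_aut l (k + i) x = x) \<Longrightarrow> chain l k r x = x"
proof (induct r)
  case (Suc r)
  have "s_aut l (k + Suc r) x = x" using Suc.prems[of "Suc r"] by simp
  moreover have "chain l k r x = x" by (rule Suc.hyps) (use Suc.prems in auto)
  ultimately show ?case by simp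
qed simp

fun cfl :: "(nat \<Rightarrow> rf) \<Rightarrow> (nat \<Rightarrow> rf) \<Rightarrow> nat \<Rightarrow> rf" where
  "cfl a f 0 = a 0 / f 0"
| "cfl a f (Suc r) = (\<Sum>i\<le>Suc r. a i) / (f 0 - cfl (\<lambda>i. a (Suc i)) (\<lambda>i. f (Suc i)) r)"

lemma cf_cfl: "cf l k r = cfl (\<lambda>i. alph l (k + i)) (\<lambda>i. fv l (k + i)) r"
  by (induct r arbitrary: k) simp_all

lemma cfl_cong: "(\<And>i. i \<le> r \<Longrightarrow> a i = a' i) \<Longrightarrow> (\<And>i. i \<le> r \<Longrightarrow> f i = f' i) \<Longrightarrow> cfl a f r = cfl a' f' r"
proof (induct r arbitrary: a f a' f')
  case (Suc r)
  have "cfl (\<lambda>i. a (Suc i)) (\<lambda>i. f (Suc i)) r = cfl (\<lambda>i. a' (Suc i)) (\<lambda>i. f' (Suc i)) r"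
    by (rule Suc.hyps) (use Suc.prems in auto)
  moreover have "(\<Sum>i\<le>Suc r. a i) = (\<Sum>i\<le>Suc r. a' i)" by (rule sum.cong) (use Suc.prems in auto)
  ultimately show ?case using Suc.prems(2)[of 0] by simp
qed simp

lemma cfl_hom: "fhom h \<Longrightarrow> h (cfl a f r) = cfl (\<lambda>i. h (a i)) (\<lambda>i. h (f i)) r"
  by (induct r arbitrary: a f) (simp_all add: fhom_divide fhom_diff fhom_sum del: sum.atMost_Suc)

lemma cfl_step: "cfl (\<lambda>i. if i = r then a r + a (Suc r) else a i) (\<lambda>i. if i = r then f r - a (Suc r) / f (Suc r) else f i) r = cfl a f (Suc r)"
proof (induct r arbitrary: a f)
  case 0
  show ?case by simp
next
  case (Suc r)
  have IH: "cfl (\<lambda>i. if i = r then a (Suc r) + a (Suc (Suc r)) else a (Suc i))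
              (\<lambda>i. if i = r then f (Suc r) - a (Suc (Suc r)) / f (Suc (Suc r)) else f (Suc i)) r
            = cfl (\<lambda>i. a (Suc i)) (\<lambda>i. f (Suc i)) (Suc r)"
    using Suc.hyps[of "\<lambda>i. a (Suc i)" "\<lambda>i. f (Suc i)"] by simp
  have S: "(\<Sum>i\<le>Suc r. if i = Suc r then a (Suc r) + a (Suc (Suc r)) else a i) = (\<Sum>i\<le>Suc (Suc r). a i)"
  proof -
    have "(\<Sum>i\<le>r. if i = Suc r then a (Suc r) + a (Suc (Suc r)) else a i) = (\<Sum>i\<le>r. a i)"
      by (rule sum.cong) auto
    then show ?thesis by (simp add: add.assoc)
  qed
  show ?case
    by (simp only: cfl.simps S) (simp add: IH)
qed

lemma g_cfl: "2 \<le> l \<Longrightarrow> r \<le> l - 1 \<Longrightarrow> g l k r = cfl (\<lambda>i. alph l (k + i)) (\<lambda>i. fv l (k + i)) r"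
proof (induct r)
  case 0
  then show ?case by (simp add: g_def)
next
  case (Suc r)
  note l = Suc.prems(1)
  have "g l k (Suc r) = s_aut l (k + Suc r) (g l k r)" by (simp add: g_def)
  also have "\<dots> = cfl (\<lambda>i. s_aut l (k + Suc r) (alph l (k + i))) (\<lambda>i. s_aut l (k + Suc r) (fv l (k + i))) r"
    using Suc by (simp add: cfl_hom s_fhom)
  also have "\<dots> = cfl (\<lambda>i. if i = r then alph l (k + r) + alph l (k + Suc r) else alph l (k + i))
       (\<lambda>i. if i = r then fv l (k + r) - alph l (k + Suc r) / fv l (k + Suc r) else fv l (k + i)) r"
  proof (rule cfl_cong)
    fix i assume i: "i \<le> r"
    show "s_aut l (k + Suc r) (alph l (k + i)) = (if i = r then alph l (k + r) + alph l (k + Suc r) else alph l (k + i))"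
      using saK[of l "Suc r" i k] i Suc.prems by auto
    show "s_aut l (k + Suc r) (fv l (k + i)) = (if i = r then fv l (k + r) - alph l (k + Suc r) / fv l (k + Suc r) else fv l (k + i))"
      using sfK[of l "Suc r" i k] i Suc.prems by auto
  qed
  also have "\<dots> = cfl (\<lambda>i. alph l (k + i)) (\<lambda>i. fv l (k + i)) (Suc r)"
    using cfl_step[of r "\<lambda>i. alph l (k + i)" "\<lambda>i. fv l (k + i)"] by simp
  finally show ?case .
qed

lemma g_cf: "2 \<le> l \<Longrightarrow> r \<le> l - 1 \<Longrightarrow> g l k r = cf l k r"
  by (simp add: g_cfl cf_cfl)

lemma pi_g: "2 \<le> l \<Longrightarrow> r \<le> l - 1 \<Longrightarrow> pi_aut l (g l k r) = g l (Suc k) r"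
  by (simp add: g_cfl cfl_hom pi_fhom pi_alph pi_fv)


lemma chain_fk:
  assumes l: "2 \<le> l" and r: "1 \<le> r" "r \<le> l - 1"
  shows "chain l k r (fv l k) = fv l k - g l (Suc k) (r - 1)"
proof -
  obtain r' where r': "r = Suc r'" using r by (cases r) auto
  have s1: "s_aut l (Suc k) (fv l k) = fv l k - alph l (Suc k) / fv l (Suc k)"
    using sfK[of l 1 0 k] l by simp
  have fx: "chain l (Suc k) r' (fv l k) = fv l k"
  proof (rule chain_fix)
    fix i assume i: "1 \<le> i" "i \<le> r'"
    have "Suc i \<noteq> l" using i r r' by simp
    then show "s_aut l (Suc k + i) (fv l k) = fv l k"
      using sfK[of l "Suc i" 0 k] l i r r' by simp
  qed
  have "chain l k r (fv l k) = chain l (Suc k) r' (fv l k - alph l (Suc k) / fv l (Suc k))"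
    by (simp only: r' chain_shift comp_apply s1)
  also have "\<dots> = fv l k - g l (Suc k) r'"
    by (simp add: fhom_diff[OF chain_fhom[OF l]] fx g_def)
  finally show ?thesis by (simp add: r')
qed

lemma chain_fj:
  assumes l: "2 \<le> l" and j: "2 \<le> j" "j \<le> l"
  shows "chain l 0 l (fv l j) = chain l j (l - j) (fv l j) + g l (j - 1) (l - j + 1)"
proof -
  have jj: "(j - 2) + (l - j + 2) = l" using j by simp
  have e1: "chain l 0 l = chain l (j - 2) (l - j + 2) \<circ> chain l 0 (j - 2)"
    using chain_add[of l 0 "j - 2" "l - j + 2"] by (simp only: jj add.left_neutral)
  have fx: "chain l 0 (j - 2) (fv l j) = fv l j"
  proof (rule chain_fix)
    fix i assume i: "1 \<le> i" "i \<le> j - 2"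
    have "j \<noteq> Suc i" "Suc j \<noteq> i" using i j by auto
    then show "s_aut l (0 + i) (fv l j) = fv l j"
      using sfZ[of l i j] l i j by simp
  qed
  have j1: "Suc (l - j + 1) = l - j + 2" "Suc (j - 2) = j - 1" using j by simp_all
  have e2: "chain l (j - 2) (l - j + 2) = chain l (j - 1) (l - j + 1) \<circ> s_aut l (j - 1)"
    using chain_shift[of l "j - 2" "l - j + 1"] by (simp only: j1)
  have s1: "s_aut l (j - 1) (fv l j) = fv l j + alph l (j - 1) / fv l (j - 1)"
    using sfZ[of l "j - 1" j] l j by simp
  have j2: "Suc (l - j) = l - j + 1" "Suc (j - 1) = j" using j by simp_all
  have e3: "chain l (j - 1) (l - j + 1) = chain l j (l - j) \<circ> s_aut l j"
    using chain_shift[of l "j - 1" "l - j"] by (simp only: j2)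
  have s2: "s_aut l j (fv l j) = fv l j"
    using sfZ[of l j j] l j by simp
  have "chain l 0 l (fv l j) = chain l (j - 1) (l - j + 1) (fv l j + alph l (j - 1) / fv l (j - 1))"
    by (simp only: e1 fx e2 s1 comp_apply)
  also have "\<dots> = chain l (j - 1) (l - j + 1) (fv l j) + g l (j - 1) (l - j + 1)"
    by (simp only: fhom_add[OF chain_fhom[OF l]] g_def)
  also have "chain l (j - 1) (l - j + 1) (fv l j) = chain l j (l - j) (fv l j)"
    by (simp only: e3 s2 comp_apply)
  finally show ?thesis .
qed

definition P :: "nat \<Rightarrow> nat \<Rightarrow> nat \<Rightarrow> rf" where
  "P l k r = (\<Sum>i\<le>r. alph l (k + i))"

lemma P_step:
  assumes l: "2 \<le> l" and r: "Suc r \<le> l - 1"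
  shows "s_aut l (k + Suc r) (P l k r) = P l k (Suc r)"
proof -
  have "s_aut l (k + Suc r) (P l k r) = (\<Sum>i\<le>r. s_aut l (k + Suc r) (alph l (k + i)))"
    by (simp add: P_def fhom_sum[OF s_fhom[OF l]])
  also have "\<dots> = (\<Sum>i\<le>r. alph l (k + i) + (if i = r then alph l (k + Suc r) else 0))"
  proof (rule sum.cong)
    fix i assume "i \<in> {..r}"
    then show "s_aut l (k + Suc r) (alph l (k + i)) = alph l (k + i) + (if i = r then alph l (k + Suc r) else 0)"
      using saK[of l "Suc r" i k] l r by auto
  qed simp
  also have "\<dots> = P l k (Suc r)"
    by (simp add: sum.distrib P_def)
  finally show ?thesis .
qed

lemma chain_P: "2 \<le> l \<Longrightarrow> r \<le> l - 1 \<Longrightarrow> chain l k r (alph l k) = P l k r"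
proof (induct r)
  case 0 then show ?case by (simp add: P_def)
next
  case (Suc r)
  then show ?case using P_step[of l r k] by simp
qed

lemma P_full: "P l k l = delta l"
proof (induct k)
  case 0 then show ?case by (simp add: P_def delta_def)
next
  case (Suc k)
  have a: "alph l (k + Suc l) = alph l k"
    unfolding alph_def using mod_add_self2[of k "Suc l"] by simp
  have "(\<Sum>i\<le>Suc l. alph l (k + i)) = alph l (k + 0) + (\<Sum>i\<le>l. alph l (k + Suc i))"
    by (rule sum.atMost_Suc_shift)
  then have "P l (Suc k) l = P l k l"
    using a by (simp add: P_def)
  then show ?case using Suc by simp
qed

lemma P_last: "P l k (Suc r) = P l k r + alph l (k + Suc r)"
  by (simp add: P_def)

lemma pi_P: "pi_aut l (P l k r) = P l (Suc k) r"
  by (simp add: P_def fhom_sum[OF pi_fhom] pi_alph)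


lemma alph_Suc_l[simp]: "alph l (Suc l) = alph l 0" by (simp add: alph_def)
lemma fv_Suc_l[simp]: "fv l (Suc l) = fv l 0" by (simp add: fv_def)

lemma chain_last: "2 \<le> l \<Longrightarrow> chain l 0 l = s_aut l l \<circ> chain l 0 (l - 1)"
proof -
  assume l: "2 \<le> l"
  have e: "Suc (l - 1) = l" "0 + l = l" using l by simp_all
  show ?thesis using chain.simps(2)[of l 0 "l - 1"] by (simp only: e)
qed

lemma chain_first: "2 \<le> l \<Longrightarrow> chain l 0 l = chain l 1 (l - 1) \<circ> s_aut l 1"
proof -
  assume l: "2 \<le> l"
  have e: "Suc (l - 1) = l" "Suc 0 = 1" using l by simp_all
  show ?thesis using chain_shift[of l 0 "l - 1"] by (simp only: e)
qed

lemma T1_f0: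
  assumes l: "2 \<le> l"
  shows "T1 l (fv l 0) = fv l 1 - g l 2 (l - 1) + g l 0 0"
proof -
  have c: "chain l 0 (l - 1) (fv l 0) = fv l 0 - g l 1 (l - 2)"
    using chain_fk[OF l, of "l - 1" 0] l by (simp add: numeral_2_eq_2)
  have s: "s_aut l l (fv l 0) = fv l 0 + alph l l / fv l l" using sfZ[of l l 0] l by simp
  have gs: "s_aut l l (g l 1 (l - 2)) = g l 1 (l - 1)"
  proof -
    have e: "l - 1 = Suc (l - 2)" "1 + Suc (l - 2) = l" using l by simp_all
    show ?thesis unfolding g_def by (simp only: e chain.simps comp_apply)
  qed
  have "T1 l (fv l 0) = pi_aut l (fv l 0 + alph l l / fv l l - g l 1 (l - 1))"
    unfolding T1_def using c s gs by (simp add: chain_last[OF l] fhom_diff[OF s_fhom[OF l]])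
  also have "\<dots> = fv l 1 + alph l 0 / fv l 0 - g l 2 (l - 1)"
    using pi_g[OF l, of "l - 1" 1] by (simp add: fhom_diff[OF pi_fhom] fhom_add[OF pi_fhom] fhom_divide[OF pi_fhom] pi_alph pi_fv numeral_2_eq_2)
  also have "\<dots> = fv l 1 - g l 2 (l - 1) + g l 0 0" by (simp add: g_def)
  finally show ?thesis .
qed

lemma T1_f1:
  assumes l: "2 \<le> l"
  shows "T1 l (fv l 1) = fv l 2 - g l 3 (l - 2)"
proof -
  have s: "s_aut l 1 (fv l 1) = fv l 1" using sfZ[of l 1 1] l by simp
  have c: "chain l 1 (l - 1) (fv l 1) = fv l 1 - g l 2 (l - 2)"
    using chain_fk[OF l, of "l - 1" 1] l by (simp add: numeral_2_eq_2)
  have "T1 l (fv l 1) = pi_aut l (fv l 1 - g l 2 (l - 2))"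
    unfolding T1_def by (simp only: comp_apply chain_first[OF l] s c)
  also have "\<dots> = fv l 2 - g l 3 (l - 2)"
    using pi_g[OF l, of "l - 2" 2] by (simp add: fhom_diff[OF pi_fhom] pi_fv numeral_2_eq_2 numeral_3_eq_3)
  finally show ?thesis .
qed

lemma T1_fj:
  assumes l: "2 \<le> l" and j: "2 \<le> j" "j \<le> l - 1"
  shows "T1 l (fv l j) = fv l (j + 1) - g l (j + 2) (l - 1 - j) + g l j (l + 1 - j)"
proof -
  have c: "chain l j (l - j) (fv l j) = fv l j - g l (Suc j) (l - 1 - j)"
    using chain_fk[OF l, of "l - j" j] j by simp
  have "T1 l (fv l j) = pi_aut l (fv l j - g l (Suc j) (l - 1 - j) + g l (j - 1) (l - j + 1))"
    unfolding T1_def using chain_fj[OF l, of j] j c by simp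
  also have "\<dots> = fv l (j + 1) - g l (Suc (Suc j)) (l - 1 - j) + g l (Suc (j - 1)) (l - j + 1)"
    using pi_g[OF l, of "l - 1 - j" "Suc j"] pi_g[OF l, of "l - j + 1" "j - 1"] j
    by (simp add: fhom_diff[OF pi_fhom] fhom_add[OF pi_fhom] pi_fv)
  also have "\<dots> = fv l (j + 1) - g l (j + 2) (l - 1 - j) + g l j (l + 1 - j)"
  proof -
    have "Suc (Suc j) = j + 2" "Suc (j - 1) = j" "l - j + 1 = l + 1 - j" using j by simp_all
    then show ?thesis by (simp only:)
  qed
  finally show ?thesis .
qed

lemma T1_fl:
  assumes l: "2 \<le> l"
  shows "T1 l (fv l l) = fv l 0 + g l l 1"
proof -
  have "T1 l (fv l l) = pi_aut l (fv l l + g l (l - 1) 1)"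
    unfolding T1_def using chain_fj[OF l, of l] l by simp
  also have "\<dots> = fv l 0 + g l l 1"
    using pi_g[OF l, of 1 "l - 1"] l by (simp add: fhom_add[OF pi_fhom] pi_fv)
  finally show ?thesis .
qed


lemma T1_a0:
  assumes l: "2 \<le> l"
  shows "T1 l (alph l 0) = alph l 0 + delta l"
proof -
  have c: "chain l 0 (l - 1) (alph l 0) = P l 0 (l - 1)"
    using chain_P[OF l, of "l - 1" 0] by simp
  have "s_aut l l (P l 0 (l - 1)) = (\<Sum>i\<le>l - 1. s_aut l l (alph l i))"
    by (simp add: P_def fhom_sum[OF s_fhom[OF l]])
  also have "\<dots> = (\<Sum>i\<le>l - 1. alph l i + (if i = 0 then alph l l else 0) + (if i = l - 1 then alph l l else 0))"
  proof (rule sum.cong)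
    fix i assume "i \<in> {..l - 1}"
    then have i: "i \<le> l - 1" by simp
    have "0 \<noteq> l - 1" using l by simp
    then show "s_aut l l (alph l i) = alph l i + (if i = 0 then alph l l else 0) + (if i = l - 1 then alph l l else 0)"
      using saZ[of l l i] l i by auto
  qed simp
  also have "\<dots> = P l 0 (l - 1) + alph l l + alph l l"
    by (simp add: sum.distrib P_def)
  also have "P l 0 (l - 1) + alph l l = delta l"
  proof -
    have e: "Suc (l - 1) = l" using l by simp
    show ?thesis using P_last[of l 0 "l - 1"] P_full[of l 0] by (simp only: e add_0_left)
  qed
  finally have s: "s_aut l l (P l 0 (l - 1)) = delta l + alph l l" .
  have "T1 l (alph l 0) = pi_aut l (delta l + alph l l)"
    unfolding T1_def by (simp only: comp_apply chain_last[OF l] c s)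
  also have "\<dots> = delta l + alph l 0"
    using pi_P[of l 0 l] P_full[of l 0] P_full[of l 1]
    by (simp add: fhom_add[OF pi_fhom] pi_alph)
  finally show ?thesis by simp
qed

lemma T1_a1:
  assumes l: "2 \<le> l"
  shows "T1 l (alph l 1) = alph l 1 - delta l"
proof -
  have s: "s_aut l 1 (alph l 1) = - alph l 1" using saZ[of l 1 1] l by simp
  have c: "chain l 1 (l - 1) (alph l 1) = P l 1 (l - 1)"
    using chain_P[OF l, of "l - 1" 1] by simp
  have "T1 l (alph l 1) = pi_aut l (- P l 1 (l - 1))"
    unfolding T1_def by (simp only: comp_apply chain_first[OF l] s c fhom_uminus[OF chain_fhom[OF l]])
  also have "\<dots> = - P l 2 (l - 1)"
    by (simp add: fhom_uminus[OF pi_fhom] pi_P numeral_2_eq_2)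
  also have "P l 2 (l - 1) = delta l - alph l 1"
  proof -
    have e: "Suc (l - 1) = l" using l by simp
    have a: "alph l (2 + l) = alph l 1"
      unfolding alph_def using mod_add_self2[of 1 "Suc l"] by simp
    show ?thesis using P_last[of l 2 "l - 1"] P_full[of l 2] a by (simp only: e) simp
  qed
  finally show ?thesis by simp
qed

lemma T1_aj:
  assumes l: "2 \<le> l" and j: "2 \<le> j" "j \<le> l"
  shows "T1 l (alph l j) = alph l j"
proof -
  have e1: "chain l 0 l = chain l j (l - j) \<circ> (s_aut l j \<circ> (s_aut l (j - 1) \<circ> chain l 0 (j - 2)))"
  proof -
    have jj: "j + (l - j) = l" using j by simp
    have a: "chain l 0 l = chain l j (l - j) \<circ> chain l 0 j"
      using chain_add[of l 0 j "l - j"] by (simp only: jj add.left_neutral)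
    have e: "j = Suc (Suc (j - 2))" "0 + Suc (Suc (j - 2)) = j" "0 + Suc (j - 2) = j - 1" using j by simp_all
    have b: "chain l 0 j = s_aut l j \<circ> (s_aut l (j - 1) \<circ> chain l 0 (j - 2))"
      by (subst e(1)) (simp only: chain.simps e(2) e(3))
    show ?thesis by (simp only: a b)
  qed
  have fx: "chain l 0 (j - 2) (alph l j) = alph l j"
  proof (rule chain_fix)
    fix i assume i: "1 \<le> i" "i \<le> j - 2"
    have "j \<noteq> i" "j \<noteq> Suc i" "Suc j \<noteq> i" using i j by auto
    then show "s_aut l (0 + i) (alph l j) = alph l j"
      using saZ[of l i j] l i j by simp
  qed
  have jn: "j \<noteq> j - 1" "j - 1 + 1 = j" "j - 1 \<noteq> j" using j by auto
  have s1: "s_aut l (j - 1) (alph l j) = alph l j + alph l (j - 1)"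
    using saZ[of l "j - 1" j] l j jn by auto
  have s2: "s_aut l j (alph l j + alph l (j - 1)) = alph l (j - 1)"
    using saZ[of l j j] saZ[of l j "j - 1"] l j jn by (auto simp add: fhom_add[OF s_fhom[OF l]])
  have fx2: "chain l j (l - j) (alph l (j - 1)) = alph l (j - 1)"
  proof (rule chain_fix)
    fix i assume i: "1 \<le> i" "i \<le> l - j"
    have "j - 1 \<noteq> j + i" "j - 1 \<noteq> j + i + 1" "j - 1 + 1 \<noteq> j + i" "j - 1 \<noteq> 0" using i j by auto
    then show "s_aut l (j + i) (alph l (j - 1)) = alph l (j - 1)"
      using saZ[of l "j + i" "j - 1"] l i j by auto
  qed
  have "T1 l (alph l j) = pi_aut l (alph l (j - 1))"
    unfolding T1_def by (simp only: comp_apply e1 fx s1 s2 fx2)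
  also have "\<dots> = alph l j" using j by (simp add: pi_alph)
  finally show ?thesis .
qed

theorem mainTheorem5:
  fixes l :: nat
  assumes "2 \<le> l"
  shows "(\<forall>k r. k \<le> l \<and> r \<le> l - 1 \<longrightarrow> g l k r = cf l k r)
    \<and> T1 l (fv l 0) = fv l 1 - g l 2 (l - 1) + g l 0 0
    \<and> T1 l (fv l 1) = fv l 2 - g l 3 (l - 2)
    \<and> (\<forall>j. 2 \<le> j \<and> j \<le> l - 1 \<longrightarrow>
          T1 l (fv l j) = fv l (j + 1) - g l (j + 2) (l - 1 - j) + g l j (l + 1 - j))
    \<and> T1 l (fv l l) = fv l 0 + g l l 1
    \<and> T1 l (alph l 0) = alph l 0 + delta l
    \<and> T1 l (alph l 1) = alph l 1 - delta l
    \<and> (\<forall>j. 2 \<le> j \<and> j \<le> l \<longrightarrow> T1 l (alph l j) = alph l j)"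
  using assms g_cf T1_f0 T1_f1 T1_fj T1_fl T1_a0 T1_a1 T1_aj by blast

end
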